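(* Let $\mathcal{D}$ be a proof in $\mathsf{NIKm}$ of the polarised nested sequent $\Sigma$. Then there is a proof in $\mathbf{C}_{\mathbf{IK}}$ of the flat bi-nested sequent $\mathrm{fl}(\Sigma)$.
   Context: Formulas are generated by $A::=p\mid\bot\mid\top\mid A\wedge A\mid A\vee A\mid A\supset A\mid\Box A\mid\Diamond A$. Polarised nested sequents: either empty or $A_1^\bullet,\dots,A_k^\bullet,B_1^\circ,\dots,B_h^\circ,[\Sigma_1],\dots,[\Sigma_n]$ (a multiset), with $A_i,B_j$ formulas, $\Sigma_l$ polarised nested sequents; $^\bullet$ marks input (left) and $^\circ$ output (right) formulas. A polarised context $\Sigma\{\ \}$ is a polarised nested sequent with a hole in place of one formula occurrence (at some node of its tree); $\Sigma\{\Pi\}$ fills the hole with the polarised nested sequent $\Pi$ (its formulas and blocks are added at that node). $\Sigma^\downarrow\{\ \}$ denotes $\Sigma\{\ \}$ with all output formulas removed everywhere. The rules of $\mathsf{NIKm}$ (premisses / conclusion) are: axioms $\Sigma\{\bot^\bullet\}$ and $\Sigma\{p^\bullet,p^\circ\}$; $(\wedge^\bullet)$ $\Sigma\{A^\bullet,B^\bullet\}$ / $\Sigma\{(A\wedge B)^\bullet\}$; $(\wedge^\circ)$ $\Sigma\{A^\circ\}$, $\Sigma\{B^\circ\}$ / $\Sigma\{(A\wedge B)^\circ\}$; $(\vee^\bullet)$ $\Sigma\{A^\bullet\}$, $\Sigma\{B^\bullet\}$ / $\Sigma\{(A\vee B)^\bullet\}$; $(\vee^\circ)$ $\Sigma\{A^\circ,B^\circ\}$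 / $\Sigma\{(A\vee B)^\circ\}$; $(\supset^\bullet)$ $\Sigma\{A^\circ\}$, $\Sigma\{B^\bullet\}$ / $\Sigma\{(A\supset B)^\bullet\}$; $(\supset^\circ)$ $\Sigma^\downarrow\{A^\bullet,B^\circ\}$ / $\Sigma\{(A\supset B)^\circ\}$; $(\Box^\bullet)$ $\Sigma\{[\Delta,A^\bullet]\}$ / $\Sigma\{(\Box A)^\bullet,[\Delta]\}$; $(\Box^\circ)$ $\Sigma^\downarrow\{[A^\circ]\}$ / $\Sigma\{(\Box A)^\circ\}$; $(\Diamond^\bullet)$ $\Sigma\{[A^\bullet]\}$ / $\Sigma\{(\Diamond A)^\bullet\}$; $(\Diamond^\circ)$ $\Sigma\{[\Delta,A^\circ]\}$ / $\Sigma\{(\Diamond A)^\circ,[\Delta]\}$; contractions $\Sigma\{A^\bullet,A^\bullet\}$ / $\Sigma\{A^\bullet\}$ and $\Sigma\{A^\circ,A^\circ\}$ / $\Sigma\{A^\circ\}$. A proof is a finite tree of such rule instances with all leaves axioms. Translation: for a polarised nested sequent $\Sigma=A_1^\bullet,\dots,A_k^\bullet,B_1^\circ,\dots,B_h^\circ,[\Sigma_1],\dots,[\Sigma_n]$, $\mathrm{fl}(\Sigma)$ is the bi-nested sequent $A_1,\dots,A_k\Rightarrow B_1,\dots,B_h,[\mathrm{fl}(\Sigma_1)],\dots,[\mathrm{fl}(\Sigma_n)]$ (containing no implication blocks). Bi-nested sequents: the empty sequent $\Rightarrow$ is one; if $\Gamma,\Delta'$ are finite multisets of formulas and $S_1,\dots,S_m,T_1,\dots,T_n$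 are bi-nested sequents then $\Gamma\Rightarrow\Delta',\langle S_1\rangle,\dots,\langle S_m\rangle,[T_1],\dots,[T_n]$ is one ($\langle S\rangle$ implication block, $[T]$ modal block). A context $G\{\ \}$ is either the hole $\{\ \}$, or $\Gamma\Rightarrow\Delta,\langle G'\{\ \}\rangle$, or $\Gamma\Rightarrow\Delta,[G'\{\ \}]$; $G\{S\}$ fills the hole with $S$. For a consequent $\Delta$, $\Delta^*$ is $\emptyset$ if $\Delta$ has no modal block, and if $\Delta=\Delta_0,[\Lambda_1\Rightarrow\Theta_1],\dots,[\Lambda_k\Rightarrow\Theta_k]$ with $\Delta_0$ free of modal blocks, $\Delta^*=[\Lambda_1\Rightarrow\Theta_1^*],\dots,[\Lambda_k\Rightarrow\Theta_k^*]$. The calculus $\mathbf{C}_{\mathbf{IK}}$ (premisses / conclusion): axioms $G\{\Gamma,\bot\Rightarrow\Delta\}$, $G\{\Gamma\Rightarrow\top,\Delta\}$, $G\{\Gamma,p\Rightarrow\Delta,p\}$ ($p$ atomic); $(\wedge_L)$ $G\{A,B,\Gamma\Rightarrow\Delta\}$ / $G\{A\wedge B,\Gamma\Rightarrow\Delta\}$; $(\wedge_R)$ $G\{\Gamma\Rightarrow\Delta,A\}$, $G\{\Gamma\Rightarrow\Delta,B\}$ / $G\{\Gamma\Rightarrow\Delta,A\wedge B\}$; $(\vee_L)$ $G\{\Gamma,A\Rightarrow\Delta\}$, $G\{\Gamma,B\Rightarrow\Delta\}$ / $G\{\Gamma,A\vee B\Rightarrow\Delta\}$; $(\vee_R)$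 $G\{\Gamma\Rightarrow\Delta,A,B\}$ / $G\{\Gamma\Rightarrow\Delta,A\vee B\}$; $(\supset_L)$ $G\{\Gamma,A\supset B\Rightarrow A,\Delta\}$, $G\{\Gamma,B\Rightarrow\Delta\}$ / $G\{\Gamma,A\supset B\Rightarrow\Delta\}$; $(\supset_R)$ $G\{\Gamma\Rightarrow\Delta,\langle A\Rightarrow B\rangle\}$ / $G\{\Gamma\Rightarrow\Delta,A\supset B\}$; $(\Box_L)$ $G\{\Gamma,\Box A\Rightarrow\Delta,[\Sigma,A\Rightarrow\Pi]\}$ / $G\{\Gamma,\Box A\Rightarrow\Delta,[\Sigma\Rightarrow\Pi]\}$; $(\Box_R)$ $G\{\Gamma\Rightarrow\Delta,\langle\,\Rightarrow[\,\Rightarrow A]\rangle\}$ / $G\{\Gamma\Rightarrow\Delta,\Box A\}$; $(\Diamond_L)$ $G\{\Gamma\Rightarrow\Delta,[A\Rightarrow\,]\}$ / $G\{\Gamma,\Diamond A\Rightarrow\Delta\}$; $(\Diamond_R)$ $G\{\Gamma\Rightarrow\Delta,\Diamond A,[\Sigma\Rightarrow\Pi,A]\}$ / $G\{\Gamma\Rightarrow\Delta,\Diamond A,[\Sigma\Rightarrow\Pi]\}$; (trans) $G\{\Gamma,\Gamma'\Rightarrow\Delta,\langle\Gamma',\Sigma\Rightarrow\Pi\rangle\}$ / $G\{\Gamma,\Gamma'\Rightarrow\Delta,\langle\Sigma\Rightarrow\Pi\rangle\}$; $(\mathrm{inter}_{fc})$ $G\{\Gamma\Rightarrow\Delta,\langle\Sigma\Rightarrow\Pi,[\Lambda\Rightarrow\Theta^*]\rangle,[\Lambda\Rightarrow\Theta]\}$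 / $G\{\Gamma\Rightarrow\Delta,\langle\Sigma\Rightarrow\Pi\rangle,[\Lambda\Rightarrow\Theta]\}$; $(\mathrm{inter}_{bc})$ $G\{\Gamma\Rightarrow\Delta,[\Lambda\Rightarrow\Theta,\langle\Sigma\Rightarrow\Pi\rangle],\langle\,\Rightarrow[\Sigma\Rightarrow\Pi]\rangle\}$ / $G\{\Gamma\Rightarrow\Delta,[\Lambda\Rightarrow\Theta,\langle\Sigma\Rightarrow\Pi\rangle]\}$. A proof of $S$ is a finite tree of sequents built with these rules, with root $S$ and all leaves axioms. *)

theory Defs
  imports Main "HOL-Library.Multiset"
begin

datatype 'a fm =
    At 'a | Bot | Top
  | Conj "'a fm" "'a fm" | Disj "'a fm" "'a fm" | Imp "'a fm" "'a fm"
  | Box "'a fm" | Dia "'a fm"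

text \<open>PSeq I Ou B: input formulas I, output formulas O, blocks B (all multisets).\<close>
datatype 'a pseq = PSeq "'a fm multiset" "'a fm multiset" "'a pseq multiset"

definition pplus :: "'a pseq \<Rightarrow> 'a pseq \<Rightarrow> 'a pseq" where
  "pplus S T = (case S of PSeq I Ou B \<Rightarrow> case T of PSeq I' Ou' B' \<Rightarrow> PSeq (I + I') (Ou + Ou') (B + B'))"

abbreviation pin :: "'a fm multiset \<Rightarrow> 'a pseq" where "pin I \<equiv> PSeq I {#} {#}"
abbreviation pout :: "'a fm multiset \<Rightarrow> 'a pseq" where "pout Ou \<equiv> PSeq {#} Ou {#}"
abbreviation pblk :: "'a pseq \<Rightarrow> 'a pseq" where "pblk S \<equiv> PSeq {#} {#} {#S#}"

text \<open>Polarised contexts are given by the path to the node of the hole: PCBlk I Ou B c is a node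
with inputs I, outputs O, blocks B and one further block containing the context c.
A general context \<Sigma>{ } with the hole at a node is a path context c together with the
remaining contents \<Pi> of the hole's node; \<Sigma>{X} is then pfill c (pplus \<Pi> X).\<close>
datatype 'a pctx = PHole | PCBlk "'a fm multiset" "'a fm multiset" "'a pseq multiset" "'a pctx"

primrec pfill :: "'a pctx \<Rightarrow> 'a pseq \<Rightarrow> 'a pseq" where
  "pfill PHole S = S"
| "pfill (PCBlk I Ou B c) S = PSeq I Ou (B + {# pfill c S #})"

primrec pdown :: "'a pseq \<Rightarrow> 'a pseq" where
  "pdown (PSeq I Ou B) = PSeq I {#} (image_mset pdown B)"

primrec pcdown :: "'a pctx \<Rightarrow> 'a pctx" where
  "pcdown PHole = PHole"
| "pcdown (PCBlk I Ou B c) = PCBlk I {#} (image_mset pdown B) (pcdown c)"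

inductive nikm :: "'a pseq \<Rightarrow> bool" where
  ax_bot: "nikm (pfill c (pplus P (pin {#Bot#})))"
| ax_at: "nikm (pfill c (pplus P (PSeq {#At p#} {#At p#} {#})))"
| conj_in: "nikm (pfill c (pplus P (pin {#A, B#}))) \<Longrightarrow> nikm (pfill c (pplus P (pin {#Conj A B#})))"
| conj_out: "nikm (pfill c (pplus P (pout {#A#}))) \<Longrightarrow> nikm (pfill c (pplus P (pout {#B#})))
      \<Longrightarrow> nikm (pfill c (pplus P (pout {#Conj A B#})))"
| disj_in: "nikm (pfill c (pplus P (pin {#A#}))) \<Longrightarrow> nikm (pfill c (pplus P (pin {#B#})))
      \<Longrightarrow> nikm (pfill c (pplus P (pin {#Disj A B#})))"
| disj_out: "nikm (pfill c (pplus P (pout {#A, B#}))) \<Longrightarrow> nikm (pfill c (pplus P (pout {#Disj A B#})))"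
| imp_in: "nikm (pfill c (pplus P (pout {#A#}))) \<Longrightarrow> nikm (pfill c (pplus P (pin {#B#})))
      \<Longrightarrow> nikm (pfill c (pplus P (pin {#Imp A B#})))"
| imp_out: "nikm (pfill (pcdown c) (pplus (pdown P) (PSeq {#A#} {#B#} {#})))
      \<Longrightarrow> nikm (pfill c (pplus P (pout {#Imp A B#})))"
| box_in: "nikm (pfill c (pplus P (pblk (pplus D (pin {#A#})))))
      \<Longrightarrow> nikm (pfill c (pplus P (PSeq {#Box A#} {#} {#D#})))"
| box_out: "nikm (pfill (pcdown c) (pplus (pdown P) (pblk (pout {#A#}))))
      \<Longrightarrow> nikm (pfill c (pplus P (pout {#Box A#})))"
| dia_in: "nikm (pfill c (pplus P (pblk (pin {#A#})))) \<Longrightarrow> nikm (pfill c (pplus P (pin {#Dia A#})))"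
| dia_out: "nikm (pfill c (pplus P (pblk (pplus D (pout {#A#})))))
      \<Longrightarrow> nikm (pfill c (pplus P (PSeq {#} {#Dia A#} {#D#})))"
| contr_in: "nikm (pfill c (pplus P (pin {#A, A#}))) \<Longrightarrow> nikm (pfill c (pplus P (pin {#A#})))"
| contr_out: "nikm (pfill c (pplus P (pout {#A, A#}))) \<Longrightarrow> nikm (pfill c (pplus P (pout {#A#})))"

text \<open>BSeq G D I M is  G \<Rightarrow> D, <I_1>,...,<I_m>, [M_1],...,[M_n]  (antecedent G, consequent
formulas D, implication blocks I, modal blocks M).\<close>
datatype 'a bseq = BSeq "'a fm multiset" "'a fm multiset" "'a bseq multiset" "'a bseq multiset"

text \<open>Contexts: the hole, or  G \<Rightarrow> D,<G'{ }>  or  G \<Rightarrow> D,[G'{ }]  (D a consequent, here split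
into formulas, implication blocks and modal blocks).\<close>
datatype 'a bctx = BHole
  | BCImp "'a fm multiset" "'a fm multiset" "'a bseq multiset" "'a bseq multiset" "'a bctx"
  | BCMod "'a fm multiset" "'a fm multiset" "'a bseq multiset" "'a bseq multiset" "'a bctx"

primrec bfill :: "'a bctx \<Rightarrow> 'a bseq \<Rightarrow> 'a bseq" where
  "bfill BHole S = S"
| "bfill (BCImp G D I M c) S = BSeq G D (I + {# bfill c S #}) M"
| "bfill (BCMod G D I M c) S = BSeq G D I (M + {# bfill c S #})"

primrec bstar :: "'a bseq \<Rightarrow> 'a bseq" where
  "bstar (BSeq G D I M) = BSeq G {#} {#} (image_mset bstar M)"

inductive cik :: "'a bseq \<Rightarrow> bool" where
  ax_bot: "cik (bfill c (BSeq (G + {#Bot#}) D I M))"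
| ax_top: "cik (bfill c (BSeq G (D + {#Top#}) I M))"
| ax_at: "cik (bfill c (BSeq (G + {#At p#}) (D + {#At p#}) I M))"
| conjL: "cik (bfill c (BSeq (G + {#A, B#}) D I M)) \<Longrightarrow> cik (bfill c (BSeq (G + {#Conj A B#}) D I M))"
| conjR: "cik (bfill c (BSeq G (D + {#A#}) I M)) \<Longrightarrow> cik (bfill c (BSeq G (D + {#B#}) I M))
      \<Longrightarrow> cik (bfill c (BSeq G (D + {#Conj A B#}) I M))"
| disjL: "cik (bfill c (BSeq (G + {#A#}) D I M)) \<Longrightarrow> cik (bfill c (BSeq (G + {#B#}) D I M))
      \<Longrightarrow> cik (bfill c (BSeq (G + {#Disj A B#}) D I M))"
| disjR: "cik (bfill c (BSeq G (D + {#A, B#}) I M)) \<Longrightarrow> cik (bfill c (BSeq G (D + {#Disj A B#}) I M))"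
| impL: "cik (bfill c (BSeq (G + {#Imp A B#}) (D + {#A#}) I M)) \<Longrightarrow> cik (bfill c (BSeq (G + {#B#}) D I M))
      \<Longrightarrow> cik (bfill c (BSeq (G + {#Imp A B#}) D I M))"
| impR: "cik (bfill c (BSeq G D (I + {# BSeq {#A#} {#B#} {#} {#} #}) M))
      \<Longrightarrow> cik (bfill c (BSeq G (D + {#Imp A B#}) I M))"
| boxL: "cik (bfill c (BSeq (G + {#Box A#}) D I (M + {# BSeq (S + {#A#}) P PI PM #})))
      \<Longrightarrow> cik (bfill c (BSeq (G + {#Box A#}) D I (M + {# BSeq S P PI PM #})))"
| boxR: "cik (bfill c (BSeq G D (I + {# BSeq {#} {#} {#} {# BSeq {#} {#A#} {#} {#} #} #}) M))
      \<Longrightarrow> cik (bfill c (BSeq G (D + {#Box A#}) I M))"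
| diaL: "cik (bfill c (BSeq G D I (M + {# BSeq {#A#} {#} {#} {#} #})))
      \<Longrightarrow> cik (bfill c (BSeq (G + {#Dia A#}) D I M))"
| diaR: "cik (bfill c (BSeq G (D + {#Dia A#}) I (M + {# BSeq S (P + {#A#}) PI PM #})))
      \<Longrightarrow> cik (bfill c (BSeq G (D + {#Dia A#}) I (M + {# BSeq S P PI PM #})))"
| trans: "cik (bfill c (BSeq (G + G') D (I + {# BSeq (G' + S) P PI PM #}) M))
      \<Longrightarrow> cik (bfill c (BSeq (G + G') D (I + {# BSeq S P PI PM #}) M))"
| inter_fc: "cik (bfill c (BSeq G D (I + {# BSeq S P PI (PM + {# bstar (BSeq L T TI TM) #}) #})
                                      (M + {# BSeq L T TI TM #})))
      \<Longrightarrow> cik (bfill c (BSeq G D (I + {# BSeq S P PI PM #}) (M + {# BSeq L T TI TM #})))"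
| inter_bc: "cik (bfill c (BSeq G D (I + {# BSeq {#} {#} {#} {# BSeq S P PI PM #} #})
                                   (M + {# BSeq L T (TI + {# BSeq S P PI PM #}) TM #})))
      \<Longrightarrow> cik (bfill c (BSeq G D I (M + {# BSeq L T (TI + {# BSeq S P PI PM #}) TM #})))"

primrec fl :: "'a pseq \<Rightarrow> 'a bseq" where
  "fl (PSeq I Ou B) = BSeq I Ou {#} (image_mset fl B)"

end

theory Submission
  imports Defs
begin
fun ant :: "'a bseq \<Rightarrow> 'a fm multiset" where "ant (BSeq G D I M) = G"
fun suc :: "'a bseq \<Rightarrow> 'a fm multiset" where "suc (BSeq G D I M) = D"
fun imps :: "'a bseq \<Rightarrow> 'a bseq multiset" where "imps (BSeq G D I M) = I"
fun mods :: "'a bseq \<Rightarrow> 'a bseq multiset" where "mods (BSeq G D I M) = M"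

primrec lcov :: "'a fm \<Rightarrow> 'a bseq \<Rightarrow> bool" where
  "lcov (At p) n = (At p \<in># ant n)"
| "lcov Bot n = (Bot \<in># ant n)"
| "lcov Top n = (Top \<in># ant n)"
| "lcov (Conj A B) n = (Conj A B \<in># ant n \<or> (lcov A n \<and> lcov B n))"
| "lcov (Disj A B) n = (Disj A B \<in># ant n \<or> lcov A n \<or> lcov B n)"
| "lcov (Imp A B) n = (Imp A B \<in># ant n \<or> lcov B n)"
| "lcov (Box A) n = (Box A \<in># ant n)"
| "lcov (Dia A) n = (Dia A \<in># ant n \<or> (\<exists>b\<in>#mods n. lcov A b))"

primrec rcov :: "'a fm \<Rightarrow> 'a bseq \<Rightarrow> bool" where
  "rcov (At p) n = (At p \<in># suc n)"
| "rcov Bot n = (Bot \<in># suc n)"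
| "rcov Top n = (Top \<in># suc n)"
| "rcov (Conj A B) n = (Conj A B \<in># suc n \<or> rcov A n \<or> rcov B n)"
| "rcov (Disj A B) n = (Disj A B \<in># suc n \<or> (rcov A n \<and> rcov B n))"
| "rcov (Imp A B) n = (Imp A B \<in># suc n \<or> (\<exists>b\<in>#imps n. lcov A b \<and> rcov B b))"
| "rcov (Box A) n = (Box A \<in># suc n \<or> (\<exists>b\<in>#imps n. \<exists>b2\<in>#mods b. rcov A b2))"
| "rcov (Dia A) n = (Dia A \<in># suc n)"

inductive cov :: "'a bseq \<Rightarrow> 'a bseq \<Rightarrow> bool" where
  "\<lbrakk>\<forall>F\<in>#ant S. lcov F T; \<forall>F\<in>#suc S. rcov F T;
    \<forall>b\<in>#imps S. \<exists>b'\<in>#imps T. cov b b'; \<forall>b\<in>#mods S. \<exists>b'\<in>#mods T. cov b b'\<rbrakk> \<Longrightarrow> cov S T"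

lemma cov_iff: "cov S T \<longleftrightarrow> (\<forall>F\<in>#ant S. lcov F T) \<and> (\<forall>F\<in>#suc S. rcov F T) \<and>
    (\<forall>b\<in>#imps S. \<exists>b'\<in>#imps T. cov b b') \<and> (\<forall>b\<in>#mods S. \<exists>b'\<in>#mods T. cov b b')"
  by (subst cov.simps) auto

lemma lcov_mem: "F \<in># ant n \<Longrightarrow> lcov F n" by (cases F) auto
lemma rcov_mem: "F \<in># suc n \<Longrightarrow> rcov F n" by (cases F) auto

lemma cov_refl: "cov S S"
proof (induction S)
  case (BSeq G D I M)
  show ?case apply (rule cov.intros) using BSeq by (auto intro: lcov_mem rcov_mem)
qed

lemma lcov_mem_trans: "F \<in># ant T \<Longrightarrow> cov T U \<Longrightarrow> lcov F U"
  by (auto simp: cov_iff[of T U])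
lemma rcov_mem_trans: "F \<in># suc T \<Longrightarrow> cov T U \<Longrightarrow> rcov F U"
  by (auto simp: cov_iff[of T U])

lemma lcov_trans: "lcov F T \<Longrightarrow> cov T U \<Longrightarrow> lcov F U"
proof (induction F arbitrary: T U)
  case (Dia A)
  from Dia.prems(2) have c: "\<forall>b\<in>#mods T. \<exists>b'\<in>#mods U. cov b b'"
    by (simp_all add: cov_iff[of T U])
  show ?case
  proof (cases "Dia A \<in># ant T")
    case True then show ?thesis using Dia.prems lcov_mem_trans by blast
  next
    case False
    then obtain b where b: "b \<in># mods T" "lcov A b" using Dia.prems(1) by auto
    then obtain b' where "b' \<in># mods U" "cov b b'" using c by auto
    then show ?thesis using b Dia.IH by auto
  qed
next
  case (Conj A B) then show ?case using lcov_mem_trans[of "Conj A B" T U] by auto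
next
  case (Disj A B) then show ?case using lcov_mem_trans[of "Disj A B" T U] by auto
next
  case (Imp A B) then show ?case using lcov_mem_trans[of "Imp A B" T U] by auto
qed (use lcov_mem_trans in force)+

lemma rcov_trans: "rcov F T \<Longrightarrow> cov T U \<Longrightarrow> rcov F U"
proof (induction F arbitrary: T U)
  case (Imp A B)
  from Imp.prems(2) have c: "\<forall>b\<in>#imps T. \<exists>b'\<in>#imps U. cov b b'"
    by (simp_all add: cov_iff[of T U])
  show ?case
  proof (cases "Imp A B \<in># suc T")
    case True then show ?thesis using Imp.prems rcov_mem_trans by blast
  next
    case False
    then obtain b where b: "b \<in># imps T" "lcov A b" "rcov B b" using Imp.prems(1) by auto
    then obtain b' where "b' \<in># imps U" "cov b b'" using c by auto
    then show ?thesis using b Imp.IH lcov_trans by (meson rcov.simps(6))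
  qed
next
  case (Box A)
  from Box.prems(2) have c: "\<forall>b\<in>#imps T. \<exists>b'\<in>#imps U. cov b b'"
    by (simp_all add: cov_iff[of T U])
  show ?case
  proof (cases "Box A \<in># suc T")
    case True then show ?thesis using Box.prems rcov_mem_trans by blast
  next
    case False
    then obtain b b2 where b: "b \<in># imps T" "b2 \<in># mods b" "rcov A b2" using Box.prems(1) by auto
    then obtain b' where b': "b' \<in># imps U" "cov b b'" using c by auto
    then obtain b2' where "b2' \<in># mods b'" "cov b2 b2'" using b by (auto simp: cov_iff[of b b'])
    then show ?thesis using b b' Box.IH by auto
  qed
next
  case (Conj A B) then show ?case using rcov_mem_trans[of "Conj A B" T U] by auto
next
  case (Disj A B) then show ?case using rcov_mem_trans[of "Disj A B" T U] by auto
qed (use rcov_mem_trans in force)+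

lemma cov_trans: "cov S T \<Longrightarrow> cov T U \<Longrightarrow> cov S U"
proof (induction arbitrary: U rule: cov.induct)
  case (1 S T)
  show ?case
  proof (rule cov.intros)
    show "\<forall>F\<in>#ant S. lcov F U" using 1 lcov_trans by blast
    show "\<forall>F\<in>#suc S. rcov F U" using 1 rcov_trans by blast
    show "\<forall>b\<in>#imps S. \<exists>b'\<in>#imps U. cov b b'"
    proof
      fix b assume "b \<in># imps S"
      then obtain b' where "b' \<in># imps T" "cov b b'" "\<forall>U. cov b' U \<longrightarrow> cov b U" using 1(3) by blast
      moreover then obtain b'' where "b'' \<in># imps U" "cov b' b''" using 1(5) by (auto simp: cov_iff[of T U])
      ultimately show "\<exists>b'\<in>#imps U. cov b b'" by blast
    qed
    show "\<forall>b\<in>#mods S. \<exists>b'\<in>#mods U. cov b b'"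
    proof
      fix b assume "b \<in># mods S"
      then obtain b' where "b' \<in># mods T" "cov b b'" "\<forall>U. cov b' U \<longrightarrow> cov b U" using 1(4) by blast
      moreover then obtain b'' where "b'' \<in># mods U" "cov b' b''" using 1(5) by (auto simp: cov_iff[of T U])
      ultimately show "\<exists>b'\<in>#mods U. cov b b'" by blast
    qed
  qed
qed

lemma lcov_mono: "lcov F n \<Longrightarrow> set_mset (ant n) \<subseteq> set_mset (ant n') \<Longrightarrow> set_mset (mods n) \<subseteq> set_mset (mods n') \<Longrightarrow> lcov F n'"
  by (induction F) auto

lemma rcov_mono: "rcov F n \<Longrightarrow> set_mset (suc n) \<subseteq> set_mset (suc n') \<Longrightarrow> set_mset (imps n) \<subseteq> set_mset (imps n') \<Longrightarrow> rcov F n'"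
  by (induction F) auto

lemma cov_mono: "cov S T \<Longrightarrow> set_mset (ant T) \<subseteq> set_mset (ant T') \<Longrightarrow> set_mset (suc T) \<subseteq> set_mset (suc T')
  \<Longrightarrow> set_mset (imps T) \<subseteq> set_mset (imps T') \<Longrightarrow> set_mset (mods T) \<subseteq> set_mset (mods T') \<Longrightarrow> cov S T'"
  unfolding cov_iff[of S T] cov_iff[of S T'] using lcov_mono rcov_mono by blast

lemma cov_weak: "set_mset G \<subseteq> set_mset G' \<Longrightarrow> set_mset D \<subseteq> set_mset D' \<Longrightarrow> set_mset I \<subseteq> set_mset I' \<Longrightarrow> set_mset M \<subseteq> set_mset M'
  \<Longrightarrow> cov (BSeq G D I M) (BSeq G' D' I' M')"
  using cov_mono[OF cov_refl[of "BSeq G D I M"], of "BSeq G' D' I' M'"] by simp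

lemma cov_repl_imp: "cov b b2 \<Longrightarrow> cov (BSeq G D (add_mset b I) M) (BSeq G D (add_mset b2 I) M)"
  apply (rule cov.intros)
  using cov_refl by (auto intro: lcov_mem rcov_mem)

lemma cov_repl_mod: "cov b b2 \<Longrightarrow> cov (BSeq G D I (add_mset b M)) (BSeq G D I (add_mset b2 M))"
  apply (rule cov.intros)
  using cov_refl by (auto intro: lcov_mem rcov_mem)

lemma bstar_sel[simp]: "ant (bstar n) = ant n" "suc (bstar n) = {#}" "imps (bstar n) = {#}" "mods (bstar n) = image_mset bstar (mods n)"
  by (cases n; simp)+

lemma lcov_bstar: "lcov F n \<Longrightarrow> lcov F (bstar n)"
  by (induction F arbitrary: n) auto

lemma lcov_sat: "lcov F n \<Longrightarrow> set_mset (ant n) \<subseteq> set_mset (ant n') \<Longrightarrow> (\<forall>b\<in>#mods n. bstar b \<in># mods n') \<Longrightarrow> lcov F n'"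
proof (induction F)
  case (Dia A)
  show ?case
  proof (cases "Dia A \<in># ant n")
    case True then show ?thesis using Dia.prems by auto
  next
    case False
    then obtain b where "b \<in># mods n" "lcov A b" using Dia.prems by auto
    then show ?thesis using Dia.prems lcov_bstar by (metis lcov.simps(8))
  qed
qed auto

lemma cov_bstar: "cov x y \<Longrightarrow> cov (bstar x) (bstar y)"
proof (induction rule: cov.induct)
  case (1 S T)
  obtain G D I M where S: "S = BSeq G D I M" by (cases S)
  obtain G' D' I' M' where T: "T = BSeq G' D' I' M'" by (cases T)
  have a: "\<forall>F\<in>#G. lcov F (bstar T)" using 1(1) lcov_bstar S by auto
  have m: "\<forall>b\<in># image_mset bstar M. \<exists>b'\<in># image_mset bstar M'. cov b b'"
  proof
    fix b assume "b \<in># image_mset bstar M"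
    then obtain x where x: "x \<in># M" "b = bstar x" by auto
    then obtain x' where "x' \<in># M'" "cov (bstar x) (bstar x')" using 1(4) S T by auto
    then show "\<exists>b'\<in># image_mset bstar M'. cov b b'" using x by auto
  qed
  have a': "\<forall>F\<in>#G. lcov F (BSeq G' {#} {#} (image_mset bstar M'))" using a T by simp
  have e: "bstar S = BSeq G {#} {#} (image_mset bstar M)" "bstar T = BSeq G' {#} {#} (image_mset bstar M')" using S T by simp_all
  show ?case unfolding e
    apply (rule cov.intros)
    subgoal using a' by simp
    subgoal by simp
    subgoal by simp
    subgoal using m by simp
    done
qed

fun bcomp :: "'a bctx \<Rightarrow> 'a bctx \<Rightarrow> 'a bctx" where
  "bcomp BHole d = d"
| "bcomp (BCImp G D I M c) d = BCImp G D I M (bcomp c d)"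
| "bcomp (BCMod G D I M c) d = BCMod G D I M (bcomp c d)"

lemma bfill_bcomp: "bfill (bcomp c d) S = bfill c (bfill d S)"
  by (induction c) auto

lemma cov_ctx: "cov Y Yp \<Longrightarrow> cov (bfill c Y) (bfill c Yp)"
  by (induction c) (auto intro: cov_repl_imp cov_repl_mod)


lemma cov_add_imp: "cov (BSeq G D (add_mset b I) M) T \<longleftrightarrow> cov (BSeq G D I M) T \<and> (\<exists>b'\<in>#imps T. cov b b')"
  by (simp add: cov_iff[of "BSeq G D (add_mset b I) M" T] cov_iff[of "BSeq G D I M" T]) blast
lemma cov_add_mod: "cov (BSeq G D I (add_mset b M)) T \<longleftrightarrow> cov (BSeq G D I M) T \<and> (\<exists>b'\<in>#mods T. cov b b')"
  by (simp add: cov_iff[of "BSeq G D I (add_mset b M)" T] cov_iff[of "BSeq G D I M" T]) blast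
lemma cov_add_ant: "cov (BSeq (add_mset F G) D I M) T \<longleftrightarrow> cov (BSeq G D I M) T \<and> lcov F T"
  by (simp add: cov_iff[of "BSeq (add_mset F G) D I M" T] cov_iff[of "BSeq G D I M" T]) blast
lemma cov_add_suc: "cov (BSeq G (add_mset F D) I M) T \<longleftrightarrow> cov (BSeq G D I M) T \<and> rcov F T"
  by (simp add: cov_iff[of "BSeq G (add_mset F D) I M" T] cov_iff[of "BSeq G D I M" T]) blast

lemma cov_split: "cov (bfill c X) T \<Longrightarrow> \<exists>c' Y. T = bfill c' Y \<and> cov X Y \<and>
   (\<forall>Xp Yp. cov Xp Yp \<longrightarrow> cov Y Yp \<longrightarrow> cov (bfill c Xp) (bfill c' Yp))"
proof (induction c arbitrary: T)
  case BHole
  then show ?case by (intro exI[of _ BHole] exI[of _ T]) auto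
next
  case (BCImp G D I M c1)
  have h: "cov (BSeq G D (add_mset (bfill c1 X) I) M) T" using BCImp.prems by simp
  then obtain b' where b': "b' \<in># imps T" "cov (bfill c1 X) b'" and r: "cov (BSeq G D I M) T"
    unfolding cov_add_imp by blast
  from BCImp.IH[OF b'(2)] obtain c1' Y where Y: "b' = bfill c1' Y" "cov X Y"
    and H: "\<forall>Xp Yp. cov Xp Yp \<longrightarrow> cov Y Yp \<longrightarrow> cov (bfill c1 Xp) (bfill c1' Yp)" by blast
  obtain G' D' I' M' where T: "T = BSeq G' D' I' M'" by (cases T)
  have I': "I' = add_mset b' (I' - {#b'#})" using b'(1) T by simp
  let ?c = "BCImp G' D' (I' - {#b'#}) M' c1'"
  have "T = bfill ?c Y" using T I' Y(1) by simp
  moreover have "\<forall>Xp Yp. cov Xp Yp \<longrightarrow> cov Y Yp \<longrightarrow> cov (bfill (BCImp G D I M c1) Xp) (bfill ?c Yp)"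
  proof (intro allI impI)
    fix Xp Yp assume a: "cov Xp Yp" "cov Y Yp"
    have "cov T (bfill ?c Yp)" using T I' Y(1) cov_repl_imp[OF cov_ctx[OF a(2)]]
      by (metis bfill.simps(2) union_mset_add_mset_right add_mset_add_single)
    then have 1: "cov (BSeq G D I M) (bfill ?c Yp)" using r cov_trans by blast
    have 2: "cov (bfill c1 Xp) (bfill c1' Yp)" using H a by blast
    show "cov (bfill (BCImp G D I M c1) Xp) (bfill ?c Yp)"
      using 1 2 by (simp add: cov_add_imp)
  qed
  ultimately show ?case using Y(2) by blast
next
  case (BCMod G D I M c1)
  have h: "cov (BSeq G D I (add_mset (bfill c1 X) M)) T" using BCMod.prems by simp
  then obtain b' where b': "b' \<in># mods T" "cov (bfill c1 X) b'" and r: "cov (BSeq G D I M) T"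
    unfolding cov_add_mod by blast
  from BCMod.IH[OF b'(2)] obtain c1' Y where Y: "b' = bfill c1' Y" "cov X Y"
    and H: "\<forall>Xp Yp. cov Xp Yp \<longrightarrow> cov Y Yp \<longrightarrow> cov (bfill c1 Xp) (bfill c1' Yp)" by blast
  obtain G' D' I' M' where T: "T = BSeq G' D' I' M'" by (cases T)
  have M': "M' = add_mset b' (M' - {#b'#})" using b'(1) T by simp
  let ?c = "BCMod G' D' I' (M' - {#b'#}) c1'"
  have "T = bfill ?c Y" using T M' Y(1) by simp
  moreover have "\<forall>Xp Yp. cov Xp Yp \<longrightarrow> cov Y Yp \<longrightarrow> cov (bfill (BCMod G D I M c1) Xp) (bfill ?c Yp)"
  proof (intro allI impI)
    fix Xp Yp assume a: "cov Xp Yp" "cov Y Yp"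
    have "cov T (bfill ?c Yp)" using T M' Y(1) cov_repl_mod[OF cov_ctx[OF a(2)]]
      by (metis bfill.simps(3) union_mset_add_mset_right add_mset_add_single)
    then have 1: "cov (BSeq G D I M) (bfill ?c Yp)" using r cov_trans by blast
    have 2: "cov (bfill c1 Xp) (bfill c1' Yp)" using H a by blast
    show "cov (bfill (BCMod G D I M c1) Xp) (bfill ?c Yp)"
      using 1 2 by (simp add: cov_add_mod)
  qed
  ultimately show ?case using Y(2) by blast
qed

lemmas cik_s = cik.intros[simplified]

lemma cik_lift: "cik X \<Longrightarrow> cik (bfill e X)"
proof (induction rule: cik.induct)
  case ax_bot then show ?case by (metis bfill_bcomp cik.ax_bot)
next
  case ax_top then show ?case by (metis bfill_bcomp cik.ax_top)
next
  case ax_at then show ?case by (metis bfill_bcomp cik.ax_at)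
next
  case conjL then show ?case by (metis bfill_bcomp cik.conjL)
next
  case conjR then show ?case by (metis bfill_bcomp cik.conjR)
next
  case disjL then show ?case by (metis bfill_bcomp cik.disjL)
next
  case disjR then show ?case by (metis bfill_bcomp cik.disjR)
next
  case impL then show ?case by (metis bfill_bcomp cik.impL)
next
  case impR then show ?case by (metis bfill_bcomp cik.impR)
next
  case boxL then show ?case by (metis bfill_bcomp cik.boxL)
next
  case boxR then show ?case by (metis bfill_bcomp cik.boxR)
next
  case diaL then show ?case by (metis bfill_bcomp cik.diaL)
next
  case diaR then show ?case by (metis bfill_bcomp cik.diaR)
next
  case trans then show ?case by (metis bfill_bcomp cik.trans)
next
  case inter_fc then show ?case by (metis bfill_bcomp cik.inter_fc)
next
  case inter_bc then show ?case by (metis bfill_bcomp cik.inter_bc)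
qed

lemma fc_loop: "Ms \<subseteq># M \<Longrightarrow> cik (bfill e (BSeq G D (add_mset (BSeq S P PI (PM + image_mset bstar Ms)) I) M))
   \<Longrightarrow> cik (bfill e (BSeq G D (add_mset (BSeq S P PI PM) I) M))"
proof (induction Ms arbitrary: PM)
  case empty then show ?case by simp
next
  case (add x Ms)
  have 1: "cik (bfill e (BSeq G D (add_mset (BSeq S P PI (add_mset (bstar x) PM + image_mset bstar Ms)) I) M))"
    using add.prems(2) by simp
  have 2: "Ms \<subseteq># M" "x \<in># M" using add.prems(1) by (auto dest: mset_subset_eq_insertD)
  have 3: "cik (bfill e (BSeq G D (add_mset (BSeq S P PI (add_mset (bstar x) PM)) I) M))"
    using add.IH[OF 2(1) 1] .
  obtain L T TI TM where x: "x = BSeq L T TI TM" by (cases x)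
  have M: "M = add_mset x (M - {#x#})" using 2(2) by simp
  show ?case using cik.inter_fc[where c=e and G=G and D=D and I=I and S=S and P=P and PI=PI and PM=PM
      and L=L and T=T and TI=TI and TM=TM and M="M - {#x#}"] 3 M x by simp
qed

lemma sat: "Ms \<subseteq># M \<Longrightarrow> cik (bfill e (BSeq G D (add_mset (BSeq (G + S) P PI (PM + image_mset bstar Ms)) I) M))
   \<Longrightarrow> cik (bfill e (BSeq G D (add_mset (BSeq S P PI PM) I) M))"
  using cik.trans[where c=e and G="{#}" and G'=G and D=D and I=I and S=S and P=P and PI=PI and M=M]
    fc_loop[where S="G + S"] by simp
lemma cov_splitE:
  assumes "cov (bfill c X) T"
  obtains c' Y where "T = bfill c' Y" "cov X Y" "\<And>Xp Yp. cov Xp Yp \<Longrightarrow> cov Y Yp \<Longrightarrow> cov (bfill c Xp) (bfill c' Yp)"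
  using cov_split[OF assms] apply (elim exE conjE)
  apply (rule that) apply assumption apply assumption apply (elim allE impE) by assumption+

lemma ms_split: "x \<in># M \<Longrightarrow> \<exists>M'. M = add_mset x M'" by (metis multi_member_split)
lemma ms_splitE: assumes "x \<in># M" obtains M' where "M = add_mset x M'" using ms_split[OF assms] by (elim exE) (rule that)

lemma lcov_memI: "F \<in># G \<Longrightarrow> lcov F (BSeq G D I M)" by (rule lcov_mem) simp
lemma rcov_memI: "F \<in># D \<Longrightarrow> rcov F (BSeq G D I M)" by (rule rcov_mem) simp


lemma cov_cik: "cik S \<Longrightarrow> cov S U \<Longrightarrow> cik U"
proof (induction arbitrary: U rule: cik.induct)
  case (ax_bot c G D I M)
  obtain c' Y where U: "U = bfill c' Y"
    and XY: "cov (BSeq (G + {#Bot#}) D I M) Y"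
    and H: "\<And>Xp Yp. cov Xp Yp \<Longrightarrow> cov Y Yp \<Longrightarrow> cov (bfill c Xp) (bfill c' Yp)" by (rule cov_splitE[OF ax_bot.prems]) blast
  obtain Ga Da Ia Ma where Y: "Y = BSeq Ga Da Ia Ma" by (cases Y)
  have "Bot \<in># Ga" using XY Y by (simp add: cov_add_ant)
  then obtain G2 where "Ga = add_mset Bot G2" by (rule ms_splitE) blast
  then show ?case using U Y cik.ax_bot[where c=c' and G=G2 and D=Da and I=Ia and M=Ma] by simp
next
  case (ax_top c G D I M)
  obtain c' Y where U: "U = bfill c' Y"
    and XY: "cov (BSeq G (D + {#Top#}) I M) Y"
    and H: "\<And>Xp Yp. cov Xp Yp \<Longrightarrow> cov Y Yp \<Longrightarrow> cov (bfill c Xp) (bfill c' Yp)" by (rule cov_splitE[OF ax_top.prems]) blast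
  obtain Ga Da Ia Ma where Y: "Y = BSeq Ga Da Ia Ma" by (cases Y)
  have "Top \<in># Da" using XY Y by (simp add: cov_add_suc)
  then obtain D2 where "Da = add_mset Top D2" by (rule ms_splitE) blast
  then show ?case using U Y cik.ax_top[where c=c' and G=Ga and D=D2 and I=Ia and M=Ma] by simp
next
  case (ax_at c G p D I M)
  obtain c' Y where U: "U = bfill c' Y"
    and XY: "cov (BSeq (G + {#At p#}) (D + {#At p#}) I M) Y"
    and H: "\<And>Xp Yp. cov Xp Yp \<Longrightarrow> cov Y Yp \<Longrightarrow> cov (bfill c Xp) (bfill c' Yp)" by (rule cov_splitE[OF ax_at.prems]) blast
  obtain Ga Da Ia Ma where Y: "Y = BSeq Ga Da Ia Ma" by (cases Y)
  have "At p \<in># Ga" "At p \<in># Da" using XY Y by (simp_all add: cov_add_suc cov_add_ant)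
  obtain G2 where "Ga = add_mset (At p) G2" using \<open>At p \<in># Ga\<close> by (rule ms_splitE) blast
  moreover obtain D2 where "Da = add_mset (At p) D2" using \<open>At p \<in># Da\<close> by (rule ms_splitE) blast
  ultimately show ?case using U Y cik.ax_at[where c=c' and G=G2 and D=D2 and I=Ia and M=Ma and p=p] by simp
next
  case (conjL c G A B D I M)
  obtain c' Y where U: "U = bfill c' Y"
    and XY: "cov (BSeq (G + {#Conj A B#}) D I M) Y"
    and H: "\<And>Xp Yp. cov Xp Yp \<Longrightarrow> cov Y Yp \<Longrightarrow> cov (bfill c Xp) (bfill c' Yp)" by (rule cov_splitE[OF conjL.prems]) blast
  obtain Ga Da Ia Ma where Y: "Y = BSeq Ga Da Ia Ma" by (cases Y)
  have r: "cov (BSeq G D I M) Y" and l: "lcov (Conj A B) Y" using XY by (simp_all add: cov_add_ant)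
  show ?case
  proof (cases "Conj A B \<in># Ga")
    case True
    then obtain G2 where G2: "Ga = add_mset (Conj A B) G2" by (rule ms_splitE) blast
    let ?Yp = "BSeq (add_mset A (add_mset B G2)) Da Ia Ma"
    have 1: "cov Y ?Yp" unfolding Y G2 cov_add_ant by (auto intro: cov_weak lcov_memI)
    have 2: "cov (BSeq (G + {#A, B#}) D I M) ?Yp" using cov_trans[OF r 1]
      by (simp add: cov_add_ant lcov_memI)
    have "cik (bfill c' ?Yp)" by (rule conjL.IH[OF H[OF 2 1]])
    then show ?thesis using U Y G2 cik.conjL[where c=c' and G=G2 and A=A and B=B and D=Da and I=Ia and M=Ma] by simp
  next
    case False
    then have "lcov A Y" "lcov B Y" using l Y by auto
    then have "cov (BSeq (G + {#A, B#}) D I M) Y" using r by (simp add: cov_add_ant)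
    then show ?thesis using conjL.IH[OF H[OF _ cov_refl]] U by simp
  qed
next
  case (conjR c G D A I M B)
  obtain c' Y where U: "U = bfill c' Y"
    and XY: "cov (BSeq G (D + {#Conj A B#}) I M) Y"
    and H: "\<And>Xp Yp. cov Xp Yp \<Longrightarrow> cov Y Yp \<Longrightarrow> cov (bfill c Xp) (bfill c' Yp)" by (rule cov_splitE[OF conjR.prems]) blast
  obtain Ga Da Ia Ma where Y: "Y = BSeq Ga Da Ia Ma" by (cases Y)
  have r: "cov (BSeq G D I M) Y" and l: "rcov (Conj A B) Y" using XY by (simp_all add: cov_add_suc)
  show ?case
  proof (cases "Conj A B \<in># Da")
    case True
    then obtain D2 where D2: "Da = add_mset (Conj A B) D2" by (rule ms_splitE) blast
    let ?YA = "BSeq Ga (add_mset A D2) Ia Ma"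
    let ?YB = "BSeq Ga (add_mset B D2) Ia Ma"
    have 1: "cov Y ?YA" "cov Y ?YB" unfolding Y D2 cov_add_suc by (auto intro: cov_weak rcov_memI)
    have 2: "cov (BSeq G (D + {#A#}) I M) ?YA" "cov (BSeq G (D + {#B#}) I M) ?YB"
      using cov_trans[OF r 1(1)] cov_trans[OF r 1(2)] by (simp_all add: cov_add_suc rcov_memI)
    have a1: "cik (bfill c' ?YA)" by (rule conjR.IH(1)[OF H[OF 2(1) 1(1)]])
    have a2: "cik (bfill c' ?YB)" by (rule conjR.IH(2)[OF H[OF 2(2) 1(2)]])
    show ?thesis using a1 a2 U Y D2 cik.conjR[where c=c' and G=Ga and A=A and B=B and D=D2 and I=Ia and M=Ma] by simp
  next
    case False
    then have "rcov A Y \<or> rcov B Y" using l Y by auto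
    then show ?thesis
    proof
      assume "rcov A Y"
      then have "cov (BSeq G (D + {#A#}) I M) Y" using r by (simp add: cov_add_suc)
      then show ?thesis using conjR.IH(1)[OF H[OF _ cov_refl]] U by simp
    next
      assume "rcov B Y"
      then have "cov (BSeq G (D + {#B#}) I M) Y" using r by (simp add: cov_add_suc)
      then show ?thesis using conjR.IH(2)[OF H[OF _ cov_refl]] U by simp
    qed
  qed
next
  case (disjL c G A D I M B)
  obtain c' Y where U: "U = bfill c' Y"
    and XY: "cov (BSeq (G + {#Disj A B#}) D I M) Y"
    and H: "\<And>Xp Yp. cov Xp Yp \<Longrightarrow> cov Y Yp \<Longrightarrow> cov (bfill c Xp) (bfill c' Yp)" by (rule cov_splitE[OF disjL.prems]) blast
  obtain Ga Da Ia Ma where Y: "Y = BSeq Ga Da Ia Ma" by (cases Y)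
  have r: "cov (BSeq G D I M) Y" and l: "lcov (Disj A B) Y" using XY by (simp_all add: cov_add_ant)
  show ?case
  proof (cases "Disj A B \<in># Ga")
    case True
    then obtain G2 where G2: "Ga = add_mset (Disj A B) G2" by (rule ms_splitE) blast
    let ?YA = "BSeq (add_mset A G2) Da Ia Ma"
    let ?YB = "BSeq (add_mset B G2) Da Ia Ma"
    have 1: "cov Y ?YA" "cov Y ?YB" unfolding Y G2 cov_add_ant by (auto intro: cov_weak lcov_memI)
    have 2: "cov (BSeq (G + {#A#}) D I M) ?YA" "cov (BSeq (G + {#B#}) D I M) ?YB"
      using cov_trans[OF r 1(1)] cov_trans[OF r 1(2)] by (simp_all add: cov_add_ant lcov_memI)
    have a1: "cik (bfill c' ?YA)" by (rule disjL.IH(1)[OF H[OF 2(1) 1(1)]])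
    have a2: "cik (bfill c' ?YB)" by (rule disjL.IH(2)[OF H[OF 2(2) 1(2)]])
    show ?thesis using a1 a2 U Y G2 cik.disjL[where c=c' and G=G2 and A=A and B=B and D=Da and I=Ia and M=Ma] by simp
  next
    case False
    then have "lcov A Y \<or> lcov B Y" using l Y by auto
    then show ?thesis
    proof
      assume "lcov A Y"
      then have "cov (BSeq (G + {#A#}) D I M) Y" using r by (simp add: cov_add_ant)
      then show ?thesis using disjL.IH(1)[OF H[OF _ cov_refl]] U by simp
    next
      assume "lcov B Y"
      then have "cov (BSeq (G + {#B#}) D I M) Y" using r by (simp add: cov_add_ant)
      then show ?thesis using disjL.IH(2)[OF H[OF _ cov_refl]] U by simp
    qed
  qed
next
  case (disjR c G D A B I M)
  obtain c' Y where U: "U = bfill c' Y"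
    and XY: "cov (BSeq G (D + {#Disj A B#}) I M) Y"
    and H: "\<And>Xp Yp. cov Xp Yp \<Longrightarrow> cov Y Yp \<Longrightarrow> cov (bfill c Xp) (bfill c' Yp)" by (rule cov_splitE[OF disjR.prems]) blast
  obtain Ga Da Ia Ma where Y: "Y = BSeq Ga Da Ia Ma" by (cases Y)
  have r: "cov (BSeq G D I M) Y" and l: "rcov (Disj A B) Y" using XY by (simp_all add: cov_add_suc)
  show ?case
  proof (cases "Disj A B \<in># Da")
    case True
    then obtain D2 where D2: "Da = add_mset (Disj A B) D2" by (rule ms_splitE) blast
    let ?Yp = "BSeq Ga (add_mset A (add_mset B D2)) Ia Ma"
    have 1: "cov Y ?Yp" unfolding Y D2 cov_add_suc by (auto intro: cov_weak rcov_memI)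
    have 2: "cov (BSeq G (D + {#A, B#}) I M) ?Yp" using cov_trans[OF r 1]
      by (simp add: cov_add_suc rcov_memI)
    have "cik (bfill c' ?Yp)" by (rule disjR.IH[OF H[OF 2 1]])
    then show ?thesis using U Y D2 cik.disjR[where c=c' and G=Ga and A=A and B=B and D=D2 and I=Ia and M=Ma] by simp
  next
    case False
    then have "rcov A Y" "rcov B Y" using l Y by auto
    then have "cov (BSeq G (D + {#A, B#}) I M) Y" using r by (simp add: cov_add_suc)
    then show ?thesis using disjR.IH[OF H[OF _ cov_refl]] U by simp
  qed
next
  case (impL c G A B D I M)
  obtain c' Y where U: "U = bfill c' Y"
    and XY: "cov (BSeq (G + {#Imp A B#}) D I M) Y"
    and H: "\<And>Xp Yp. cov Xp Yp \<Longrightarrow> cov Y Yp \<Longrightarrow> cov (bfill c Xp) (bfill c' Yp)" by (rule cov_splitE[OF impL.prems]) blast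
  obtain Ga Da Ia Ma where Y: "Y = BSeq Ga Da Ia Ma" by (cases Y)
  have r: "cov (BSeq G D I M) Y" and l: "lcov (Imp A B) Y" using XY by (simp_all add: cov_add_ant)
  show ?case
  proof (cases "Imp A B \<in># Ga")
    case True
    then obtain G2 where G2: "Ga = add_mset (Imp A B) G2" by (rule ms_splitE) blast
    let ?Y1 = "BSeq Ga (add_mset A Da) Ia Ma"
    let ?Y2 = "BSeq (add_mset B G2) Da Ia Ma"
    have 1: "cov Y ?Y1" unfolding Y by (rule cov_weak) auto
    have 2: "cov (BSeq (G + {#Imp A B#}) (D + {#A#}) I M) ?Y1" using cov_trans[OF XY 1]
      by (simp add: cov_add_suc rcov_memI)
    have 3: "cov Y ?Y2" unfolding Y G2 cov_add_ant by (auto intro: cov_weak lcov_memI)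
    have 4: "cov (BSeq (G + {#B#}) D I M) ?Y2" using cov_trans[OF r 3] by (simp add: cov_add_ant lcov_memI)
    have a1: "cik (bfill c' ?Y1)" by (rule impL.IH(1)[OF H[OF 2 1]])
    have a2: "cik (bfill c' ?Y2)" by (rule impL.IH(2)[OF H[OF 4 3]])
    show ?thesis using a1 a2 U Y G2 cik.impL[where c=c' and G=G2 and A=A and B=B and D=Da and I=Ia and M=Ma] by simp
  next
    case False
    then have "lcov B Y" using l Y by auto
    then have "cov (BSeq (G + {#B#}) D I M) Y" using r by (simp add: cov_add_ant)
    then show ?thesis using impL.IH(2)[OF H[OF _ cov_refl]] U by simp
  qed
next
  case (impR c G D I A B M)
  obtain c' Y where U: "U = bfill c' Y"
    and XY: "cov (BSeq G (D + {#Imp A B#}) I M) Y"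
    and H: "\<And>Xp Yp. cov Xp Yp \<Longrightarrow> cov Y Yp \<Longrightarrow> cov (bfill c Xp) (bfill c' Yp)" by (rule cov_splitE[OF impR.prems]) blast
  obtain Ga Da Ia Ma where Y: "Y = BSeq Ga Da Ia Ma" by (cases Y)
  have r: "cov (BSeq G D I M) Y" and l: "rcov (Imp A B) Y" using XY by (simp_all add: cov_add_suc)
  let ?K = "BSeq {#A#} {#B#} {#} {#} :: 'a bseq"
  show ?case
  proof (cases "Imp A B \<in># Da")
    case True
    then obtain D2 where D2: "Da = add_mset (Imp A B) D2" by (rule ms_splitE) blast
    let ?Yp = "BSeq Ga D2 (add_mset ?K Ia) Ma"
    have k: "lcov A ?K" "rcov B ?K" by (simp_all add: lcov_memI rcov_memI)
    have "rcov (Imp A B) ?Yp" using k by auto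
    then have 1: "cov Y ?Yp" unfolding Y D2 cov_add_suc by (auto intro: cov_weak)
    have 2: "cov (BSeq G D (I + {#?K#}) M) ?Yp" using cov_trans[OF r 1] cov_refl[of ?K]
      by (simp add: cov_add_imp)
    have "cik (bfill c' ?Yp)" by (rule impR.IH[OF H[OF 2 1]])
    then show ?thesis using U Y D2 cik.impR[where c=c' and G=Ga and D=D2 and I=Ia and A=A and B=B and M=Ma] by simp
  next
    case False
    then obtain b where b: "b \<in># Ia" "lcov A b" "rcov B b" using l Y by auto
    have "cov ?K b" using b by (simp add: cov_iff[of ?K b])
    then have "cov (BSeq G D (I + {#?K#}) M) Y" using r b Y by (auto simp: cov_add_imp)
    then show ?thesis using impR.IH[OF H[OF _ cov_refl]] U by simp
  qed
next
  case (boxL c G A D I M S P PI PM)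
  obtain c' Y where U: "U = bfill c' Y"
    and XY: "cov (BSeq (G + {#Box A#}) D I (M + {#BSeq S P PI PM#})) Y"
    and H: "\<And>Xp Yp. cov Xp Yp \<Longrightarrow> cov Y Yp \<Longrightarrow> cov (bfill c Xp) (bfill c' Yp)" by (rule cov_splitE[OF boxL.prems]) blast
  obtain Ga Da Ia Ma where Y: "Y = BSeq Ga Da Ia Ma" by (cases Y)
  have r: "cov (BSeq (add_mset (Box A) G) D I M) Y" and bl: "\<exists>b'\<in>#mods Y. cov (BSeq S P PI PM) b'"
    using XY by (simp_all add: cov_add_mod)
  have "Box A \<in># Ga" using r Y by (simp add: cov_add_ant)
  then obtain G2 where G2: "Ga = add_mset (Box A) G2" by (rule ms_splitE) blast
  obtain b' where b': "b' \<in># Ma" and bc: "cov (BSeq S P PI PM) b'" using bl Y by auto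
  obtain M2 where M2: "Ma = add_mset b' M2" using b' by (rule ms_splitE) blast
  obtain S2 P2 PI2 PM2 where b'e: "b' = BSeq S2 P2 PI2 PM2" by (cases b')
  let ?b = "BSeq (add_mset A S2) P2 PI2 PM2"
  let ?Yp = "BSeq Ga Da Ia (add_mset ?b M2)"
  have 0: "cov b' ?b" unfolding b'e by (rule cov_weak) auto
  have 1: "cov Y ?Yp" unfolding Y M2 by (rule cov_repl_mod[OF 0])
  have 3: "cov (BSeq (add_mset A S) P PI PM) ?b" using cov_trans[OF bc 0] by (simp add: cov_add_ant lcov_memI)
  have 2: "cov (BSeq (G + {#Box A#}) D I (M + {#BSeq (S + {#A#}) P PI PM#})) ?Yp"
    using cov_trans[OF r 1] 3 by (simp add: cov_add_mod)
  have "cik (bfill c' ?Yp)" by (rule boxL.IH[OF H[OF 2 1]])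
  then show ?case using U Y G2 M2 b'e cik.boxL[where c=c' and G=G2 and A=A and D=Da and I=Ia and M=M2
     and S=S2 and P=P2 and PI=PI2 and PM=PM2] by simp
next
  case (boxR c G D I A M)
  obtain c' Y where U: "U = bfill c' Y"
    and XY: "cov (BSeq G (D + {#Box A#}) I M) Y"
    and H: "\<And>Xp Yp. cov Xp Yp \<Longrightarrow> cov Y Yp \<Longrightarrow> cov (bfill c Xp) (bfill c' Yp)" by (rule cov_splitE[OF boxR.prems]) blast
  obtain Ga Da Ia Ma where Y: "Y = BSeq Ga Da Ia Ma" by (cases Y)
  have r: "cov (BSeq G D I M) Y" and l: "rcov (Box A) Y" using XY by (simp_all add: cov_add_suc)
  let ?K2 = "BSeq {#} {#A#} {#} {#} :: 'a bseq"
  let ?K = "BSeq {#} {#} {#} {#?K2#} :: 'a bseq"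
  show ?case
  proof (cases "Box A \<in># Da")
    case True
    then obtain D2 where D2: "Da = add_mset (Box A) D2" by (rule ms_splitE) blast
    let ?Yp = "BSeq Ga D2 (add_mset ?K Ia) Ma"
    have k: "rcov A ?K2" by (simp_all add: rcov_memI)
    have "rcov (Box A) ?Yp" using k by auto
    then have 1: "cov Y ?Yp" unfolding Y D2 cov_add_suc by (auto intro: cov_weak)
    have 2: "cov (BSeq G D (I + {#?K#}) M) ?Yp" using cov_trans[OF r 1] cov_refl[of ?K]
      by (simp add: cov_add_imp)
    have "cik (bfill c' ?Yp)" by (rule boxR.IH[OF H[OF 2 1]])
    then show ?thesis using U Y D2 cik.boxR[where c=c' and G=Ga and D=D2 and I=Ia and A=A and M=Ma] by simp
  next
    case False
    then obtain b b2 where b: "b \<in># Ia" "b2 \<in># mods b" "rcov A b2" using l Y by auto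
    have "cov ?K2 b2" using b by (simp add: cov_iff[of ?K2 b2])
    then have "cov ?K b" using b by (simp add: cov_iff[of ?K b]) blast
    then have "cov (BSeq G D (I + {#?K#}) M) Y" using r b Y by (auto simp: cov_add_imp)
    then show ?thesis using boxR.IH[OF H[OF _ cov_refl]] U by simp
  qed
next
  case (diaL c G D I M A)
  obtain c' Y where U: "U = bfill c' Y"
    and XY: "cov (BSeq (G + {#Dia A#}) D I M) Y"
    and H: "\<And>Xp Yp. cov Xp Yp \<Longrightarrow> cov Y Yp \<Longrightarrow> cov (bfill c Xp) (bfill c' Yp)" by (rule cov_splitE[OF diaL.prems]) blast
  obtain Ga Da Ia Ma where Y: "Y = BSeq Ga Da Ia Ma" by (cases Y)
  have r: "cov (BSeq G D I M) Y" and l: "lcov (Dia A) Y" using XY by (simp_all add: cov_add_ant)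
  let ?K = "BSeq {#A#} {#} {#} {#} :: 'a bseq"
  show ?case
  proof (cases "Dia A \<in># Ga")
    case True
    then obtain G2 where G2: "Ga = add_mset (Dia A) G2" by (rule ms_splitE) blast
    let ?Yp = "BSeq G2 Da Ia (add_mset ?K Ma)"
    have k: "lcov A ?K" by (simp_all add: lcov_memI)
    have "lcov (Dia A) ?Yp" using k by auto
    then have 1: "cov Y ?Yp" unfolding Y G2 cov_add_ant by (auto intro: cov_weak)
    have 2: "cov (BSeq G D I (M + {#?K#})) ?Yp" using cov_trans[OF r 1] cov_refl[of ?K]
      by (simp add: cov_add_mod)
    have "cik (bfill c' ?Yp)" by (rule diaL.IH[OF H[OF 2 1]])
    then show ?thesis using U Y G2 cik.diaL[where c=c' and G=G2 and D=Da and I=Ia and A=A and M=Ma] by simp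
  next
    case False
    then obtain b where b: "b \<in># Ma" "lcov A b" using l Y by auto
    have "cov ?K b" using b by (simp add: cov_iff[of ?K b])
    then have "cov (BSeq G D I (M + {#?K#})) Y" using r b Y by (auto simp: cov_add_mod)
    then show ?thesis using diaL.IH[OF H[OF _ cov_refl]] U by simp
  qed
next
  case (diaR c G D A I M S P PI PM)
  obtain c' Y where U: "U = bfill c' Y"
    and XY: "cov (BSeq G (D + {#Dia A#}) I (M + {#BSeq S P PI PM#})) Y"
    and H: "\<And>Xp Yp. cov Xp Yp \<Longrightarrow> cov Y Yp \<Longrightarrow> cov (bfill c Xp) (bfill c' Yp)" by (rule cov_splitE[OF diaR.prems]) blast
  obtain Ga Da Ia Ma where Y: "Y = BSeq Ga Da Ia Ma" by (cases Y)
  have r: "cov (BSeq G (add_mset (Dia A) D) I M) Y" and bl: "\<exists>b'\<in>#mods Y. cov (BSeq S P PI PM) b'"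
    using XY by (simp_all add: cov_add_mod)
  have "Dia A \<in># Da" using r Y by (simp add: cov_add_suc)
  then obtain D2 where D2: "Da = add_mset (Dia A) D2" by (rule ms_splitE) blast
  obtain b' where b': "b' \<in># Ma" and bc: "cov (BSeq S P PI PM) b'" using bl Y by auto
  obtain M2 where M2: "Ma = add_mset b' M2" using b' by (rule ms_splitE) blast
  obtain S2 P2 PI2 PM2 where b'e: "b' = BSeq S2 P2 PI2 PM2" by (cases b')
  let ?b = "BSeq S2 (add_mset A P2) PI2 PM2"
  let ?Yp = "BSeq Ga Da Ia (add_mset ?b M2)"
  have 0: "cov b' ?b" unfolding b'e by (rule cov_weak) auto
  have 1: "cov Y ?Yp" unfolding Y M2 by (rule cov_repl_mod[OF 0])
  have 3: "cov (BSeq S (add_mset A P) PI PM) ?b" using cov_trans[OF bc 0] by (simp add: cov_add_suc rcov_memI)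
  have 2: "cov (BSeq G (D + {#Dia A#}) I (M + {#BSeq S (P + {#A#}) PI PM#})) ?Yp"
    using cov_trans[OF r 1] 3 by (simp add: cov_add_mod)
  have "cik (bfill c' ?Yp)" by (rule diaR.IH[OF H[OF 2 1]])
  then show ?case using U Y D2 M2 b'e cik.diaR[where c=c' and G=Ga and A=A and D=D2 and I=Ia and M=M2
     and S=S2 and P=P2 and PI=PI2 and PM=PM2] by simp
next
  case (trans c G G2 D I S P PI PM M)
  obtain c' Y where U: "U = bfill c' Y"
    and XY: "cov (BSeq (G + G2) D (I + {#BSeq S P PI PM#}) M) Y"
    and H: "\<And>Xp Yp. cov Xp Yp \<Longrightarrow> cov Y Yp \<Longrightarrow> cov (bfill c Xp) (bfill c' Yp)" by (rule cov_splitE[OF trans.prems]) blast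
  obtain Ga Da Ia Ma where Y: "Y = BSeq Ga Da Ia Ma" by (cases Y)
  have r: "cov (BSeq (G + G2) D I M) Y" and bl: "\<exists>b'\<in>#imps Y. cov (BSeq S P PI PM) b'"
    using XY by (simp_all add: cov_add_imp)
  obtain b' where b': "b' \<in># Ia" and bc: "cov (BSeq S P PI PM) b'" using bl Y by auto
  obtain I2 where I2: "Ia = add_mset b' I2" using b' by (rule ms_splitE) blast
  obtain S2 P2 PI2 PM2 where b'e: "b' = BSeq S2 P2 PI2 PM2" by (cases b')
  let ?b = "BSeq (Ga + S2) P2 PI2 (PM2 + image_mset bstar Ma)"
  let ?Yp = "BSeq Ga Da (add_mset ?b I2) Ma"
  have 0: "cov b' ?b" unfolding b'e by (rule cov_weak) auto
  have 1: "cov Y ?Yp" unfolding Y I2 by (rule cov_repl_imp[OF 0])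
  have ants: "\<forall>F\<in>#G2. lcov F Y" using r by (simp add: cov_iff[of "BSeq (G + G2) D I M" Y])
  have l2: "\<forall>F\<in>#G2. lcov F ?b"
  proof
    fix F assume "F \<in># G2"
    then have "lcov F Y" using ants by blast
    then show "lcov F ?b" by (rule lcov_sat) (auto simp: Y)
  qed
  have 3: "cov (BSeq (G2 + S) P PI PM) ?b" using cov_trans[OF bc 0] l2
    unfolding cov_iff[of "BSeq (G2 + S) P PI PM" ?b] cov_iff[of "BSeq S P PI PM" ?b] by auto
  have 2: "cov (BSeq (G + G2) D (I + {#BSeq (G2 + S) P PI PM#}) M) ?Yp"
    using cov_trans[OF r 1] 3 by (simp add: cov_add_imp)
  have "cik (bfill c' ?Yp)" by (rule trans.IH[OF H[OF 2 1]])
  then show ?case using U Y I2 b'e sat[where Ms=Ma and M=Ma and e=c' and G=Ga and D=Da and I=I2 and S=S2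
    and P=P2 and PI=PI2 and PM=PM2] by simp
next
  case (inter_fc c G D I S P PI PM L T0 TI TM M)
  obtain c' Y where U: "U = bfill c' Y"
    and XY: "cov (BSeq G D (I + {#BSeq S P PI PM#}) (M + {#BSeq L T0 TI TM#})) Y"
    and H: "\<And>Xp Yp. cov Xp Yp \<Longrightarrow> cov Y Yp \<Longrightarrow> cov (bfill c Xp) (bfill c' Yp)" by (rule cov_splitE[OF inter_fc.prems]) blast
  obtain Ga Da Ia Ma where Y: "Y = BSeq Ga Da Ia Ma" by (cases Y)
  have r: "cov (BSeq G D I M) Y" and k: "\<exists>b'\<in>#imps Y. cov (BSeq S P PI PM) b'"
    and lb: "\<exists>b'\<in>#mods Y. cov (BSeq L T0 TI TM) b'"
    using XY by (simp_all add: cov_add_imp cov_add_mod)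
  obtain b1 where b1: "b1 \<in># Ia" and bc1: "cov (BSeq S P PI PM) b1" using k Y by auto
  obtain I2 where I2: "Ia = add_mset b1 I2" using b1 by (rule ms_splitE) blast
  obtain b2 where b2: "b2 \<in># Ma" and bc2: "cov (BSeq L T0 TI TM) b2" using lb Y by auto
  obtain M2 where M2: "Ma = add_mset b2 M2" using b2 by (rule ms_splitE) blast
  obtain S1 P1 PI1 PM1 where b1e: "b1 = BSeq S1 P1 PI1 PM1" by (cases b1)
  obtain L2 T2 TI2 TM2 where b2e: "b2 = BSeq L2 T2 TI2 TM2" by (cases b2)
  let ?b = "BSeq S1 P1 PI1 (add_mset (bstar b2) PM1)"
  let ?Yp = "BSeq Ga Da (add_mset ?b I2) Ma"
  have 0: "cov b1 ?b" unfolding b1e by (rule cov_weak) auto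
  have 1: "cov Y ?Yp" unfolding Y I2 by (rule cov_repl_imp[OF 0])
  have 3: "cov (BSeq S P PI (add_mset (bstar (BSeq L T0 TI TM)) PM)) ?b"
  proof -
    have "bstar b2 \<in># mods ?b" by simp
    then show ?thesis using cov_trans[OF bc1 0] cov_bstar[OF bc2] unfolding cov_add_mod by blast
  qed
  have 2: "cov (BSeq G D (I + {#BSeq S P PI (PM + {#bstar (BSeq L T0 TI TM)#})#}) (M + {#BSeq L T0 TI TM#})) ?Yp"
  proof -
    have "cov (BSeq G D (add_mset (BSeq S P PI (add_mset (bstar (BSeq L T0 TI TM)) PM)) I)
      (add_mset (BSeq L T0 TI TM) M)) ?Yp"
    proof -
      have g1: "cov (BSeq G D I M) ?Yp" using cov_trans[OF r 1] .
      have "?b \<in># imps ?Yp" by simp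
      then have g2: "\<exists>b\<in>#imps ?Yp. cov (BSeq S P PI (add_mset (bstar (BSeq L T0 TI TM)) PM)) b"
        using 3 by blast
      have g3: "\<exists>b\<in>#mods ?Yp. cov (BSeq L T0 TI TM) b" using b2 bc2 by auto
      have "cov (BSeq G D I (add_mset (BSeq L T0 TI TM) M)) ?Yp"
        using g1 g3 cov_add_mod[of G D I "BSeq L T0 TI TM" M ?Yp] by blast
      then show ?thesis using g2 cov_add_imp[of G D "BSeq S P PI (add_mset (bstar (BSeq L T0 TI TM)) PM)" I
         "add_mset (BSeq L T0 TI TM) M" ?Yp] by blast
    qed
    then show ?thesis by simp
  qed
  have "cik (bfill c' ?Yp)" by (rule inter_fc.IH[OF H[OF 2 1]])
  then show ?case using U Y I2 M2 b1e b2e cik.inter_fc[where c=c' and G=Ga and D=Da and I=I2 and S=S1 and P=P1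
    and PI=PI1 and PM=PM1 and L=L2 and T=T2 and TI=TI2 and TM=TM2 and M=M2] by simp
next
  case (inter_bc c G D I S P PI PM M L T0 TI TM)
  obtain c' Y where U: "U = bfill c' Y"
    and XY: "cov (BSeq G D I (M + {#BSeq L T0 (TI + {#BSeq S P PI PM#}) TM#})) Y"
    and H: "\<And>Xp Yp. cov Xp Yp \<Longrightarrow> cov Y Yp \<Longrightarrow> cov (bfill c Xp) (bfill c' Yp)" by (rule cov_splitE[OF inter_bc.prems]) blast
  obtain Ga Da Ia Ma where Y: "Y = BSeq Ga Da Ia Ma" by (cases Y)
  have lb: "\<exists>b'\<in>#mods Y. cov (BSeq L T0 (add_mset (BSeq S P PI PM) TI) TM) b'"
    using XY by (simp_all add: cov_add_mod)
  obtain b2 where b2: "b2 \<in># Ma" and bc2: "cov (BSeq L T0 (add_mset (BSeq S P PI PM) TI) TM) b2" using lb Y by auto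
  obtain M2 where M2: "Ma = add_mset b2 M2" using b2 by (rule ms_splitE) blast
  obtain L2 T2 TI2 TM2 where b2e: "b2 = BSeq L2 T2 TI2 TM2" by (cases b2)
  have "\<exists>b'\<in>#TI2. cov (BSeq S P PI PM) b'" using bc2 b2e by (simp add: cov_add_imp)
  then obtain b3 where b3: "b3 \<in># TI2" and bc3: "cov (BSeq S P PI PM) b3" by blast
  obtain TI3 where TI3: "TI2 = add_mset b3 TI3" using b3 by (rule ms_splitE) blast
  obtain S3 P3 PI3 PM3 where b3e: "b3 = BSeq S3 P3 PI3 PM3" by (cases b3)
  let ?Yp = "BSeq Ga Da (add_mset (BSeq {#} {#} {#} {#b3#}) Ia) Ma"
  have 1: "cov Y ?Yp" unfolding Y by (rule cov_weak) auto
  have e: "cov (BSeq {#} {#} {#} {#} :: 'a bseq) T" for T by (simp add: cov_iff[of "BSeq {#} {#} {#} {#}" T])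
  have n: "cov (BSeq {#} {#} {#} {#BSeq S P PI PM#}) (BSeq {#} {#} {#} {#b3#})"
    using e bc3 by (simp add: cov_add_mod)
  have 2: "cov (BSeq G D (I + {#BSeq {#} {#} {#} {#BSeq S P PI PM#}#}) (M + {#BSeq L T0 (TI + {#BSeq S P PI PM#}) TM#})) ?Yp"
    using cov_trans[OF XY 1] n by (simp add: cov_add_imp)
  have "cik (bfill c' ?Yp)" by (rule inter_bc.IH[OF H[OF 2 1]])
  then show ?case using U Y M2 b2e TI3 b3e cik.inter_bc[where c=c' and G=Ga and D=Da and I=Ia and S=S3 and P=P3
    and PI=PI3 and PM=PM3 and M=M2 and L=L2 and T=T2 and TI=TI3 and TM=TM2] by simp
qed

lemma cik_weak: "cik (bfill c X) \<Longrightarrow> cov X Y \<Longrightarrow> cik (bfill c Y)"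
  using cov_cik cov_ctx by blast

primrec bc :: "'a pctx \<Rightarrow> 'a bctx" where
  "bc PHole = BHole"
| "bc (PCBlk I Ou B c) = BCMod I Ou {#} (image_mset fl B) (bc c)"

lemma fl_pfill: "fl (pfill c S) = bfill (bc c) (fl S)"
  by (induction c) auto

lemma fl_pplus: "fl (pplus (PSeq I Ou B) (PSeq I' Ou' B')) = BSeq (I + I') (Ou + Ou') {#} (image_mset fl B + image_mset fl B')"
  by (simp add: pplus_def)

lemma bstar_fl: "bstar (fl x) = fl (pdown x)"
proof (induction x)
  case (PSeq I Ou B)
  have "image_mset (bstar \<circ> fl) B = image_mset (fl \<circ> pdown) B"
    by (rule image_mset_cong) (use PSeq in auto)
  then show ?case by (simp add: multiset.map_comp)
qed

fun addI :: "'a bseq \<Rightarrow> 'a bseq \<Rightarrow> 'a bseq" where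
  "addI (BSeq G D I M) K = BSeq G D (add_mset K I) M"

fun satw :: "'a bseq \<Rightarrow> 'a bseq multiset \<Rightarrow> 'a bseq \<Rightarrow> 'a bseq" where
  "satw Q Ms (BSeq S P PI PM) = BSeq (ant Q + S) P PI (PM + image_mset bstar Ms)"

fun fillup :: "('a fm multiset \<times> 'a fm multiset \<times> 'a bseq multiset \<times> 'a bseq multiset) list \<Rightarrow> 'a bseq \<Rightarrow> 'a bseq" where
  "fillup [] Q = Q"
| "fillup ((G,D,I,M)#r) Q = fillup r (BSeq G D I (add_mset Q M))"

fun tob :: "('a fm multiset \<times> 'a fm multiset \<times> 'a bseq multiset \<times> 'a bseq multiset) list \<Rightarrow> 'a bctx" where
  "tob [] = BHole"
| "tob ((G,D,I,M)#r) = bcomp (tob r) (BCMod G D I M BHole)"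

lemma fillup_tob: "fillup r X = bfill (tob r) X"
  by (induction r arbitrary: X rule: tob.induct) (auto simp: bfill_bcomp)

fun stp :: "'a bseq \<times> 'a bseq multiset \<times> 'a bseq \<Rightarrow> ('a fm multiset \<times> 'a fm multiset \<times> 'a bseq multiset \<times> 'a bseq multiset)
   \<Rightarrow> 'a bseq \<times> 'a bseq multiset \<times> 'a bseq" where
  "stp (Q, Ms, K) (G,D,I,M) = (BSeq G D I (add_mset (addI Q (satw Q Ms K)) M), M, BSeq {#} {#} {#} {#satw Q Ms K#})"

fun satw3 :: "'a bseq \<times> 'a bseq multiset \<times> 'a bseq \<Rightarrow> 'a bseq" where
  "satw3 (Q, Ms, K) = satw Q Ms K"

lemma up_lemma: "Ms \<subseteq># mods Q \<Longrightarrow> cik (satw3 (foldl stp (Q, Ms, K) r)) \<Longrightarrow> cik (fillup r (addI Q K))"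
proof (induction r arbitrary: Q Ms K)
  case Nil
  obtain Gq Dq Iq Mq where Q: "Q = BSeq Gq Dq Iq Mq" by (cases Q)
  obtain S P PI PM where K: "K = BSeq S P PI PM" by (cases K)
  have "cik (bfill (BCImp Gq Dq Iq Mq BHole) (satw Q Ms K))" using Nil.prems(2) by (intro cik_lift) simp
  then have "cik (bfill BHole (BSeq Gq Dq (add_mset (BSeq (Gq + S) P PI (PM + image_mset bstar Ms)) Iq) Mq))"
    by (simp add: Q K)
  from sat[OF _ this] Nil.prems(1) show ?case by (simp add: Q K)
next
  case (Cons N r)
  obtain G D I M where N: "N = (G, D, I, M)" by (cases N)
  let ?W = "satw Q Ms K"
  let ?Q' = "BSeq G D I (add_mset (addI Q ?W) M)"
  let ?K' = "BSeq {#} {#} {#} {#?W#} :: 'a bseq"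
  have "cik (fillup r (addI ?Q' ?K'))"
    using Cons.IH[of M ?Q' ?K'] Cons.prems(2) by (simp add: N)
  then have 1: "cik (bfill (tob r) (BSeq G D (add_mset ?K' I) (add_mset (addI Q ?W) M)))" by (simp add: fillup_tob)
  obtain Gq Dq Iq Mq where Q: "Q = BSeq Gq Dq Iq Mq" by (cases Q)
  obtain Sw Pw PIw PMw where W: "?W = BSeq Sw Pw PIw PMw" by (cases ?W)
  have h1: "cik (bfill (tob r) (BSeq G D (add_mset (BSeq {#} {#} {#} {#BSeq Sw Pw PIw PMw#}) I) (add_mset (addI Q (BSeq Sw Pw PIw PMw)) M)))"
    using 1 by (simp only: W)
  have "cik (bfill (tob r) (BSeq G D I (add_mset (addI Q (BSeq Sw Pw PIw PMw)) M)))"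
    using cik.inter_bc[where c="tob r" and G=G and D=D and I=I and S=Sw and P=Pw and PI=PIw and PM=PMw and M=M
      and L=Gq and T=Dq and TI=Iq and TM=Mq] h1 by (simp add: Q)
  then have "cik (bfill (tob r) (BSeq G D I (add_mset (addI Q ?W) M)))" by (simp only: W)
  then have "cik (bfill (bcomp (tob r) (BCMod G D I M BHole)) (addI Q ?W))" by (simp add: bfill_bcomp)
  then have 2: "cik (bfill (bcomp (tob r) (BCMod G D I M BHole)) (addI Q (satw Q Ms K)))" by simp
  obtain S P PI PM where K: "K = BSeq S P PI PM" by (cases K)
  have "cik (bfill (bcomp (tob r) (BCMod G D I M BHole)) (addI Q K))"
    using sat[where e="bcomp (tob r) (BCMod G D I M BHole)" and Ms=Ms and M=Mq and G=Gq and D=Dq and I=Iq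
      and S=S and P=P and PI=PI and PM=PM] 2 Cons.prems(1) by (simp add: Q K)
  then show ?case by (simp add: N fillup_tob bfill_bcomp)
qed

primrec ups :: "'a pctx \<Rightarrow> ('a fm multiset \<times> 'a fm multiset \<times> 'a bseq multiset \<times> 'a bseq multiset) list" where
  "ups PHole = []"
| "ups (PCBlk I Ou B c) = ups c @ [(I, Ou, {#}, image_mset fl B)]"

lemma fillup_append: "fillup (xs @ ys) Q = fillup ys (fillup xs Q)"
proof (induction xs arbitrary: Q)
  case (Cons a xs)
  then show ?case by (cases a) auto
qed simp

lemma fl_pfill_up: "fl (pfill c S) = fillup (ups c) (fl S)"
  by (induction c) (auto simp: fillup_append)

lemma fin_lemma: "satw3 (foldl stp (fl P, mods (fl P), fl Z) (ups c)) = fl (pfill (pcdown c) (pplus (pdown P) Z))"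
proof (induction c)
  case PHole
  obtain Ip Op Bp where P: "P = PSeq Ip Op Bp" by (cases P)
  obtain Iz Oz Bz where Z: "Z = PSeq Iz Oz Bz" by (cases Z)
  show ?case by (simp add: P Z pplus_def multiset.map_comp bstar_fl[abs_def] comp_def add_ac)
next
  case (PCBlk I Ou B c)
  obtain Q' Ms' K' where s: "foldl stp (fl P, mods (fl P), fl Z) (ups c) = (Q', Ms', K')" by (cases "foldl stp (fl P, mods (fl P), fl Z) (ups c)")
  have ih: "satw Q' Ms' K' = fl (pfill (pcdown c) (pplus (pdown P) Z))" using PCBlk s by simp
  show ?case using ih by (simp add: s multiset.map_comp bstar_fl[abs_def] comp_def add_ac)
qed

theorem theorem6p2:
  fixes \<Sigma> :: "'a pseq"
  assumes "nikm \<Sigma>"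
  shows "cik (fl \<Sigma>)"
  using assms
proof (induction rule: nikm.induct)
  case (ax_bot c P)
  obtain Ip Op Bp where P: "P = PSeq Ip Op Bp" by (cases P)
  show ?case using cik.ax_bot[where c="bc c" and G=Ip and D=Op and I="{#}" and M="image_mset fl Bp"]
    by (simp add: P fl_pfill pplus_def)
next
  case (ax_at c P p)
  obtain Ip Op Bp where P: "P = PSeq Ip Op Bp" by (cases P)
  show ?case using cik.ax_at[where c="bc c" and G=Ip and D=Op and I="{#}" and M="image_mset fl Bp" and p=p]
    by (simp add: P fl_pfill pplus_def)
next
  case (conj_in c P A B)
  obtain Ip Op Bp where P: "P = PSeq Ip Op Bp" by (cases P)
  show ?case using conj_in.IH cik.conjL[where c="bc c" and G=Ip and D=Op and I="{#}" and M="image_mset fl Bp" and A=A and B=B]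
    by (simp add: P fl_pfill pplus_def)
next
  case (conj_out c P A B)
  obtain Ip Op Bp where P: "P = PSeq Ip Op Bp" by (cases P)
  show ?case using conj_out.IH cik.conjR[where c="bc c" and G=Ip and D=Op and I="{#}" and M="image_mset fl Bp" and A=A and B=B]
    by (simp add: P fl_pfill pplus_def)
next
  case (disj_in c P A B)
  obtain Ip Op Bp where P: "P = PSeq Ip Op Bp" by (cases P)
  show ?case using disj_in.IH cik.disjL[where c="bc c" and G=Ip and D=Op and I="{#}" and M="image_mset fl Bp" and A=A and B=B]
    by (simp add: P fl_pfill pplus_def)
next
  case (disj_out c P A B)
  obtain Ip Op Bp where P: "P = PSeq Ip Op Bp" by (cases P)
  show ?case using disj_out.IH cik.disjR[where c="bc c" and G=Ip and D=Op and I="{#}" and M="image_mset fl Bp" and A=A and B=B]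
    by (simp add: P fl_pfill pplus_def)
next
  case (imp_in c P A B)
  obtain Ip Op Bp where P: "P = PSeq Ip Op Bp" by (cases P)
  have 1: "cik (bfill (bc c) (BSeq Ip (add_mset A Op) {#} (image_mset fl Bp)))"
    using imp_in.IH(1) by (simp add: P fl_pfill pplus_def)
  have 2: "cik (bfill (bc c) (BSeq (add_mset (Imp A B) Ip) (add_mset A Op) {#} (image_mset fl Bp)))"
    by (rule cik_weak[OF 1 cov_weak]) auto
  have 3: "cik (bfill (bc c) (BSeq (add_mset B Ip) Op {#} (image_mset fl Bp)))"
    using imp_in.IH(2) by (simp add: P fl_pfill pplus_def)
  show ?case using 2 3 cik.impL[where c="bc c" and G=Ip and D=Op and I="{#}" and M="image_mset fl Bp" and A=A and B=B]
    by (simp add: P fl_pfill pplus_def)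
next
  case (imp_out c P A B)
  obtain Ip Op Bp where P: "P = PSeq Ip Op Bp" by (cases P)
  have fin: "satw3 (foldl stp (fl P, mods (fl P), fl (PSeq {#A#} {#B#} {#})) (ups c))
     = fl (pfill (pcdown c) (pplus (pdown P) (PSeq {#A#} {#B#} {#})))" by (rule fin_lemma)
  have "cik (fillup (ups c) (addI (fl P) (fl (PSeq {#A#} {#B#} {#}))))"
    by (rule up_lemma) (use imp_out.IH fin in auto)
  then have "cik (bfill (tob (ups c)) (BSeq Ip Op {#BSeq {#A#} {#B#} {#} {#}#} (image_mset fl Bp)))"
    by (simp add: P fillup_tob)
  then have "cik (bfill (tob (ups c)) (BSeq Ip (Op + {#Imp A B#}) {#} (image_mset fl Bp)))"
    using cik.impR[where c="tob (ups c)" and G=Ip and D=Op and I="{#}" and A=A and B=B and M="image_mset fl Bp"] by simp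
  then show ?case by (simp add: P fl_pfill_up fillup_tob pplus_def)
next
  case (box_in c P D A)
  obtain Ip Op Bp where P: "P = PSeq Ip Op Bp" by (cases P)
  obtain Id Od Bd where De: "D = PSeq Id Od Bd" by (cases D)
  have 1: "cik (bfill (bc c) (BSeq Ip Op {#} (add_mset (BSeq (add_mset A Id) Od {#} (image_mset fl Bd)) (image_mset fl Bp))))"
    using box_in.IH by (simp add: P De fl_pfill pplus_def)
  have 2: "cik (bfill (bc c) (BSeq (add_mset (Box A) Ip) Op {#} (add_mset (BSeq (add_mset A Id) Od {#} (image_mset fl Bd)) (image_mset fl Bp))))"
    by (rule cik_weak[OF 1 cov_weak]) auto
  show ?case using 2 cik.boxL[where c="bc c" and G=Ip and A=A and D=Op and I="{#}" and M="image_mset fl Bp"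
     and S=Id and P=Od and PI="{#}" and PM="image_mset fl Bd"]
    by (simp add: P De fl_pfill pplus_def)
next
  case (box_out c P A)
  obtain Ip Op Bp where P: "P = PSeq Ip Op Bp" by (cases P)
  have fin: "satw3 (foldl stp (fl P, mods (fl P), fl (pblk (pout {#A#}))) (ups c))
     = fl (pfill (pcdown c) (pplus (pdown P) (pblk (pout {#A#}))))" by (rule fin_lemma)
  have "cik (fillup (ups c) (addI (fl P) (fl (pblk (pout {#A#})))))"
    by (rule up_lemma) (use box_out.IH fin in auto)
  then have "cik (bfill (tob (ups c)) (BSeq Ip Op {#BSeq {#} {#} {#} {#BSeq {#} {#A#} {#} {#}#}#} (image_mset fl Bp)))"
    by (simp add: P fillup_tob)
  then have "cik (bfill (tob (ups c)) (BSeq Ip (Op + {#Box A#}) {#} (image_mset fl Bp)))"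
    using cik.boxR[where c="tob (ups c)" and G=Ip and D=Op and I="{#}" and A=A and M="image_mset fl Bp"] by simp
  then show ?case by (simp add: P fl_pfill_up fillup_tob pplus_def)
next
  case (dia_in c P A)
  obtain Ip Op Bp where P: "P = PSeq Ip Op Bp" by (cases P)
  show ?case using dia_in.IH cik.diaL[where c="bc c" and G=Ip and D=Op and I="{#}" and M="image_mset fl Bp" and A=A]
    by (simp add: P fl_pfill pplus_def)
next
  case (dia_out c P D A)
  obtain Ip Op Bp where P: "P = PSeq Ip Op Bp" by (cases P)
  obtain Id Od Bd where De: "D = PSeq Id Od Bd" by (cases D)
  have 1: "cik (bfill (bc c) (BSeq Ip Op {#} (add_mset (BSeq Id (add_mset A Od) {#} (image_mset fl Bd)) (image_mset fl Bp))))"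
    using dia_out.IH by (simp add: P De fl_pfill pplus_def)
  have 2: "cik (bfill (bc c) (BSeq Ip (add_mset (Dia A) Op) {#} (add_mset (BSeq Id (add_mset A Od) {#} (image_mset fl Bd)) (image_mset fl Bp))))"
    by (rule cik_weak[OF 1 cov_weak]) auto
  show ?case using 2 cik.diaR[where c="bc c" and G=Ip and A=A and D=Op and I="{#}" and M="image_mset fl Bp"
     and S=Id and P=Od and PI="{#}" and PM="image_mset fl Bd"]
    by (simp add: P De fl_pfill pplus_def)
next
  case (contr_in c P A)
  obtain Ip Op Bp where P: "P = PSeq Ip Op Bp" by (cases P)
  have 1: "cik (bfill (bc c) (BSeq (add_mset A (add_mset A Ip)) Op {#} (image_mset fl Bp)))"
    using contr_in.IH by (simp add: P fl_pfill pplus_def)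
  have 2: "cik (bfill (bc c) (BSeq (add_mset A Ip) Op {#} (image_mset fl Bp)))"
    by (rule cik_weak[OF 1 cov_weak]) auto
  then show ?case by (simp add: P fl_pfill pplus_def)
next
  case (contr_out c P A)
  obtain Ip Op Bp where P: "P = PSeq Ip Op Bp" by (cases P)
  have 1: "cik (bfill (bc c) (BSeq Ip (add_mset A (add_mset A Op)) {#} (image_mset fl Bp)))"
    using contr_out.IH by (simp add: P fl_pfill pplus_def)
  have 2: "cik (bfill (bc c) (BSeq Ip (add_mset A Op) {#} (image_mset fl Bp)))"
    by (rule cik_weak[OF 1 cov_weak]) auto
  then show ?case by (simp add: P fl_pfill pplus_def)
qed

end
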